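(* Consider the slotted transmission system with persistently backlogged transmitter and transmission policy $P$ described in the context, with loss probability $p\in[0,1)$, feedback delay $d\ge0$ and threshold $\gamma>0$. Suppose the loss process $\{X_k\}$ is ergodic. Then, with $\bar{S}_k:=\frac1k\sum_{i=1}^kS_i$, $$\lim_{k\to\infty}\big|E[\bar{S}_k]-(1-p)\big|\le\frac{1+2d}{\gamma},$$ and $E\big(\frac1k\sum_{i=1}^kQ^r_i\big)<\infty$ for all $k$.
   Context: Time is slotted, slots $k=1,2,\dots$; in each slot exactly one packet is transmitted over a lossy path: the transmitter queue of information packets is assumed to be persistently backlogged, and in slot $k$ either an information packet ($S_k=1$) or a coded packet ($C_k=1$) is sent, with $S_k=1-C_k$, $S_k,C_k\in\{0,1\}$. Erasures: $X_k=1$ if the packet sent in slot $k$ is erased and $0$ otherwise, $X_k\in\{0,1\}$ with $E[X_k]=p$. The virtual receiver queue evolves as $Q^r_{k+1}=[Q^r_k+S_kX_k-C_k(1-X_k)]^+$, where $[x]^+=\max\{x,0\}$. Feedback reaches the transmitter with delay $d$ slots; the transmitter uses the estimate $\hat{Q}^r_k=Q^r_{k-d}+\sum_{j=k-d}^{k-1}(S_jp-C_j(1-p))$ (quantities with non-positive indices are given initial values). Transmission policy $P$ with parameter $\gamma$: $C_k\in\arg\min_{C\in\{0,1\}}(-\hat{Q}^r_k+\gamma)C$, $S_k=1-C_k$. *)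

theory Defs
  imports "HOL-Probability.Probability"
begin

definition seq_space :: "(nat \<Rightarrow> real) measure" where
  "seq_space = Pi\<^sub>M UNIV (\<lambda>_. borel)"

definition shift_seq :: "(nat \<Rightarrow> 'b) \<Rightarrow> (nat \<Rightarrow> 'b)" where
  "shift_seq f = (\<lambda>n. f (Suc n))"

definition stationary_ergodic :: "'a measure \<Rightarrow> (nat \<Rightarrow> 'a \<Rightarrow> real) \<Rightarrow> bool" where
  "stationary_ergodic M X \<longleftrightarrow>
     (let \<mu> = distr M seq_space (\<lambda>\<omega> n. X (Suc n) \<omega>) in
        distr \<mu> seq_space shift_seq = \<mu> \<and>
        (\<forall>A \<in> sets seq_space. shift_seq -` A \<inter> space seq_space = A \<longrightarrow>
             emeasure \<mu> A = 0 \<or> emeasure \<mu> A = 1))"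

text \<open>Transmitter's estimate of the receiver queue in slot k (integer indices):
  hat Q_k = Q_{k-d} + sum_{j=k-d}^{k-1} (S_j p - C_j (1-p)), with S_j = 1 - C_j.\<close>

definition Qhat_of :: "real \<Rightarrow> nat \<Rightarrow> (int \<Rightarrow> real) \<Rightarrow> (int \<Rightarrow> real) \<Rightarrow> int \<Rightarrow> real" where
  "Qhat_of p d Q C k = Q (k - int d) + (\<Sum>j\<in>{k - int d..k - 1}. (1 - C j) * p - C j * (1 - p))"

text \<open>Policy P: C_k in argmin over C in {0,1} of (gamma - hat Q_k) C; in case of a tie
  (hat Q_k = gamma) both choices are minimisers, resolved by the tie-break bit.\<close>

definition policy_C :: "real \<Rightarrow> real \<Rightarrow> bool \<Rightarrow> real" where
  "policy_C \<gamma> qh t = (if qh > \<gamma> then 1 else if qh < \<gamma> then 0 else (if t then 1 else 0))"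

text \<open>State after processing slots 1..n: Q values (valid up to index n+1)
  and C values (valid up to index n). Initially Q_k = q0 k for k \<le> 1 and C_k = c0 k for k \<le> 0.
  x is the realised loss sequence (x k = X_k).\<close>

fun traj :: "real \<Rightarrow> nat \<Rightarrow> real \<Rightarrow> (int \<Rightarrow> real) \<Rightarrow> (int \<Rightarrow> real) \<Rightarrow> (nat \<Rightarrow> bool)
             \<Rightarrow> (nat \<Rightarrow> real) \<Rightarrow> nat \<Rightarrow> (int \<Rightarrow> real) \<times> (int \<Rightarrow> real)" where
  "traj p d \<gamma> q0 c0 tb x 0 = (q0, c0)"
| "traj p d \<gamma> q0 c0 tb x (Suc n) =
     (let QC = traj p d \<gamma> q0 c0 tb x n; Q = fst QC; C = snd QC; k = int (Suc n);
          c = policy_C \<gamma> (Qhat_of p d Q C k) (tb (Suc n));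
          q' = max 0 (Q k + (1 - c) * x (Suc n) - c * (1 - x (Suc n)))
      in (Q(k + 1 := q'), C(k := c)))"

definition Cproc :: "real \<Rightarrow> nat \<Rightarrow> real \<Rightarrow> (int \<Rightarrow> real) \<Rightarrow> (int \<Rightarrow> real) \<Rightarrow> (nat \<Rightarrow> bool)
             \<Rightarrow> (nat \<Rightarrow> real) \<Rightarrow> nat \<Rightarrow> real" where
  "Cproc p d \<gamma> q0 c0 tb x k = snd (traj p d \<gamma> q0 c0 tb x k) (int k)"

definition Sproc :: "real \<Rightarrow> nat \<Rightarrow> real \<Rightarrow> (int \<Rightarrow> real) \<Rightarrow> (int \<Rightarrow> real) \<Rightarrow> (nat \<Rightarrow> bool)
             \<Rightarrow> (nat \<Rightarrow> real) \<Rightarrow> nat \<Rightarrow> real" where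
  "Sproc p d \<gamma> q0 c0 tb x k = 1 - Cproc p d \<gamma> q0 c0 tb x k"

definition Qrproc :: "real \<Rightarrow> nat \<Rightarrow> real \<Rightarrow> (int \<Rightarrow> real) \<Rightarrow> (int \<Rightarrow> real) \<Rightarrow> (nat \<Rightarrow> bool)
             \<Rightarrow> (nat \<Rightarrow> real) \<Rightarrow> nat \<Rightarrow> real" where
  "Qrproc p d \<gamma> q0 c0 tb x k = fst (traj p d \<gamma> q0 c0 tb x (k - 1)) (int k)"

end

theory Submission
  imports Defs
begin

lemma traj_Suc_fst:
  "fst (traj p d \<gamma> q0 c0 tb x (Suc n)) j =
    (if j = int (Suc n) + 1 then
       max 0 (fst (traj p d \<gamma> q0 c0 tb x n) (int (Suc n))
         + (1 - policy_C \<gamma> (Qhat_of p d (fst (traj p d \<gamma> q0 c0 tb x n)) (snd (traj p d \<gamma> q0 c0 tb x n)) (int (Suc n))) (tb (Suc n))) * x (Suc n)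
         - policy_C \<gamma> (Qhat_of p d (fst (traj p d \<gamma> q0 c0 tb x n)) (snd (traj p d \<gamma> q0 c0 tb x n)) (int (Suc n))) (tb (Suc n)) * (1 - x (Suc n)))
     else fst (traj p d \<gamma> q0 c0 tb x n) j)"
  by (simp add: Let_def)

lemma traj_Suc_snd:
  "snd (traj p d \<gamma> q0 c0 tb x (Suc n)) j =
    (if j = int (Suc n) then
       policy_C \<gamma> (Qhat_of p d (fst (traj p d \<gamma> q0 c0 tb x n)) (snd (traj p d \<gamma> q0 c0 tb x n)) (int (Suc n))) (tb (Suc n))
     else snd (traj p d \<gamma> q0 c0 tb x n) j)"
  by (simp add: Let_def)

declare traj.simps(2)[simp del]

lemma fst_stable:
  assumes "n \<le> m" "j \<le> int n + 1"
  shows "fst (traj p d \<gamma> q0 c0 tb x m) j = fst (traj p d \<gamma> q0 c0 tb x n) j"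
  using assms(1)
proof (induction m rule: dec_induct)
  case base then show ?case by simp
next
  case (step m)
  then show ?case using assms(2) by (subst traj_Suc_fst) simp
qed

lemma snd_stable:
  assumes "n \<le> m" "j \<le> int n"
  shows "snd (traj p d \<gamma> q0 c0 tb x m) j = snd (traj p d \<gamma> q0 c0 tb x n) j"
  using assms(1)
proof (induction m rule: dec_induct)
  case base then show ?case by simp
next
  case (step m)
  then show ?case using assms(2) by (subst traj_Suc_snd) simp
qed

lemma policy_C_01: "policy_C \<gamma> q t \<in> {0, 1}"
  by (simp add: policy_C_def)

lemma policy_C_1: "policy_C \<gamma> q t = 1 \<Longrightarrow> q \<ge> \<gamma>"
  by (auto simp: policy_C_def split: if_splits)

lemma policy_C_0: "policy_C \<gamma> q t = 0 \<Longrightarrow> q \<le> \<gamma>"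
  by (auto simp: policy_C_def split: if_splits)

lemma int_interval_image: "{int a .. int b - 1} = int ` {a..<b}"
proof
  show "{int a..int b - 1} \<subseteq> int ` {a..<b}"
  proof
    fix z assume z: "z \<in> {int a..int b - 1}"
    then have "z = int (nat z)" by auto
    moreover have "nat z \<in> {a..<b}" using z by auto
    ultimately show "z \<in> int ` {a..<b}" by blast
  qed
qed auto

lemma step_arith: "c \<in> {0,1} \<Longrightarrow> (y::real) \<in> {0,1} \<Longrightarrow> q \<ge> 0 \<Longrightarrow> 0 \<le> p \<Longrightarrow> p \<le> 1 \<Longrightarrow>
  \<bar>max 0 (q + (1-c)*y - c*(1-y)) - q - ((1-c)*p - c*(1-p))\<bar> \<le> (1::real)"
  by (auto simp: max_def)
lemma inc_arith: "c \<in> {0,1} \<Longrightarrow> (y::real) \<in> {0,1} \<Longrightarrow> q \<ge> 0 \<Longrightarrow> max 0 (q + (1-c)*y - c*(1-y)) \<le> q + 1"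
  by (auto simp: max_def)
lemma dec_arith: "(y::real) \<in> {0,1} \<Longrightarrow> q \<ge> 0 \<Longrightarrow> max 0 (q + (1-1)*y - 1*(1-y)) \<le> q"
  by (auto simp: max_def)
lemma rr_arith: "c \<in> {0,1} \<Longrightarrow> (y::real) \<in> {0,1} \<Longrightarrow> q \<ge> 0 \<Longrightarrow>
   0 \<le> max 0 (q + (1-c)*y - c*(1-y)) - q - (1 - c) + (1 - y) \<and> max 0 (q + (1-c)*y - c*(1-y)) - q - (1 - c) + (1 - y) \<le> 1"
  by (auto simp: max_def)
lemma rr0_arith: "(y::real) \<in> {0,1} \<Longrightarrow> q \<ge> 0 \<Longrightarrow> max 0 (q + (1-0)*y - 0*(1-y)) - q - (1 - 0) + (1 - y) = 0"
  by (auto simp: max_def)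
lemma rr1_arith: "(y::real) \<in> {0,1} \<Longrightarrow> q \<ge> 1 \<Longrightarrow> max 0 (q + (1-1)*y - 1*(1-y)) - q - (1 - 1) + (1 - y) = 0"
  by (auto simp: max_def)

context
  fixes p :: real and d :: nat and \<gamma> :: real and q0 c0 :: "int \<Rightarrow> real"
    and tb :: "nat \<Rightarrow> bool" and x :: "nat \<Rightarrow> real"
  assumes x01: "\<And>i. i \<ge> 1 \<Longrightarrow> x i \<in> {0, 1}"
    and q0nn: "\<And>k. k \<le> 1 \<Longrightarrow> q0 k \<ge> 0"
    and p0: "0 \<le> p" and p1: "p \<le> 1"
begin

abbreviation "T n \<equiv> traj p d \<gamma> q0 c0 tb x n"
abbreviation "Qg i \<equiv> fst (T (i - 1)) (int i)"
abbreviation "Cg i \<equiv> snd (T i) (int i)"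

lemma Qg_eq: "1 \<le> i \<Longrightarrow> i \<le> n + 1 \<Longrightarrow> fst (T n) (int i) = Qg i"
  by (rule fst_stable) auto

lemma Cg_eq: "1 \<le> i \<Longrightarrow> i \<le> n \<Longrightarrow> snd (T n) (int i) = Cg i"
  by (rule snd_stable) auto

lemma Qg_1: "Qg 1 = q0 1"
  by simp

lemma Cg_Suc: "Cg (Suc n) = policy_C \<gamma> (Qhat_of p d (fst (T n)) (snd (T n)) (int (Suc n))) (tb (Suc n))"
  by (subst traj_Suc_snd) simp

lemma Qg_Suc: "i \<ge> 1 \<Longrightarrow> Qg (Suc i) = max 0 (Qg i + (1 - Cg i) * x i - Cg i * (1 - x i))"
proof -
  assume "i \<ge> 1"
  then obtain n where i: "i = Suc n" by (cases i) auto
  have "Qg (Suc i) = fst (T (Suc n)) (int (Suc n) + 1)" using i by simp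
  also have "\<dots> = max 0 (Qg i + (1 - Cg i) * x i - Cg i * (1 - x i))"
    apply (subst traj_Suc_fst)
    using i Cg_Suc[of n] by simp
  finally show ?thesis .
qed

lemma Cg_01: "i \<ge> 1 \<Longrightarrow> Cg i \<in> {0, 1}"
  using Cg_Suc policy_C_01 by (cases i) auto

lemma Qg_nn: "Qg i \<ge> 0"
proof (cases i)
  case 0 then show ?thesis using q0nn by simp
next
  case (Suc n)
  then show ?thesis
  proof (cases n)
    case 0 then show ?thesis using Suc q0nn by simp
  next
    case (Suc m)
    then show ?thesis using Qg_Suc[of n] \<open>i = Suc n\<close> by simp
  qed
qed

lemma Qhat_eq:
  assumes "Suc n \<ge> d + 1"
  shows "Qhat_of p d (fst (T n)) (snd (T n)) (int (Suc n)) =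
         Qg (Suc n - d) + (\<Sum>j\<in>{Suc n - d..<Suc n}. (1 - Cg j) * p - Cg j * (1 - p))"
proof -
  have e1: "int (Suc n) - int d = int (Suc n - d)" using assms by simp
  have e2: "{int (Suc n - d) .. int (Suc n) - 1} = int ` {Suc n - d..<Suc n}"
    by (rule int_interval_image)
  have h1: "fst (T n) (int (Suc n - d)) = Qg (Suc n - d)"
    by (rule Qg_eq) (use assms in auto)
  have h2: "(\<Sum>j\<in>{int (Suc n - d) .. int (Suc n) - 1}. (1 - snd (T n) j) * p - snd (T n) j * (1 - p))
     = (\<Sum>j\<in>{Suc n - d..<Suc n}. (1 - Cg j) * p - Cg j * (1 - p))"
  proof -
    have "(\<Sum>j\<in>{int (Suc n - d) .. int (Suc n) - 1}. (1 - snd (T n) j) * p - snd (T n) j * (1 - p))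
       = (\<Sum>j\<in>{Suc n - d..<Suc n}. (1 - snd (T n) (int j)) * p - snd (T n) (int j) * (1 - p))"
      unfolding e2 by (subst sum.reindex) auto
    also have "\<dots> = (\<Sum>j\<in>{Suc n - d..<Suc n}. (1 - Cg j) * p - Cg j * (1 - p))"
    proof (rule sum.cong)
      fix j assume j: "j \<in> {Suc n - d..<Suc n}"
      have "snd (T n) (int j) = Cg j" by (rule Cg_eq) (use j assms in auto)
      then show "(1 - snd (T n) (int j)) * p - snd (T n) (int j) * (1 - p) = (1 - Cg j) * p - Cg j * (1 - p)"
        by simp
    qed simp
    finally show ?thesis .
  qed
  have "Qhat_of p d (fst (T n)) (snd (T n)) (int (Suc n)) =
     fst (T n) (int (Suc n - d)) + (\<Sum>j\<in>{int (Suc n - d) .. int (Suc n) - 1}. (1 - snd (T n) j) * p - snd (T n) j * (1 - p))"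
    unfolding Qhat_of_def e1 ..
  then show ?thesis unfolding h1 h2 .
qed

lemma step_term: "j \<ge> 1 \<Longrightarrow> \<bar>Qg (Suc j) - Qg j - ((1 - Cg j) * p - Cg j * (1 - p))\<bar> \<le> 1"
proof -
  assume j: "j \<ge> 1"
  have c: "Cg j \<in> {0,1}" using Cg_01 j .
  have xx: "x j \<in> {0,1}" using x01 j .
  have q: "Qg j \<ge> 0" by (rule Qg_nn)
  show ?thesis unfolding Qg_Suc[OF j] using step_arith[OF c xx q p0 p1] .
qed

lemma Qhat_close:
  assumes "Suc n \<ge> d + 1"
  shows "\<bar>Qg (Suc n) - Qhat_of p d (fst (T n)) (snd (T n)) (int (Suc n))\<bar> \<le> real d"
proof -
  define a where "a = Suc n - d"
  define f where "f j = Qg j" for j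
  define g where "g j = (1 - Cg j) * p - Cg j * (1 - p)" for j
  have tel: "(\<Sum>j\<in>{a..<Suc n}. f (Suc j) - f j) = f (Suc n) - f a"
    by (rule sum_Suc_diff') (simp add: a_def)
  have qe: "Qhat_of p d (fst (T n)) (snd (T n)) (int (Suc n)) = f a + (\<Sum>j\<in>{a..<Suc n}. g j)"
    unfolding Qhat_eq[OF assms] a_def f_def g_def ..
  have eq: "f (Suc n) - Qhat_of p d (fst (T n)) (snd (T n)) (int (Suc n))
      = (\<Sum>j\<in>{a..<Suc n}. f (Suc j) - f j - g j)"
  proof -
    have "(\<Sum>j\<in>{a..<Suc n}. f (Suc j) - f j - g j) = (\<Sum>j\<in>{a..<Suc n}. f (Suc j) - f j) - (\<Sum>j\<in>{a..<Suc n}. g j)"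
      by (rule sum_subtractf)
    then show ?thesis using tel qe by linarith
  qed
  have b: "\<bar>f (Suc j) - f j - g j\<bar> \<le> 1" if "j \<in> {a..<Suc n}" for j
  proof -
    have "j \<ge> 1" using that assms by (auto simp: a_def)
    then show ?thesis unfolding f_def g_def by (rule step_term)
  qed
  have "\<bar>\<Sum>j\<in>{a..<Suc n}. f (Suc j) - f j - g j\<bar> \<le> (\<Sum>j\<in>{a..<Suc n}. \<bar>f (Suc j) - f j - g j\<bar>)"
    by (rule sum_abs)
  also have "\<dots> \<le> (\<Sum>j\<in>{a..<Suc n}. 1)"
    by (rule sum_mono) (rule b)
  also have "\<dots> = real d" using assms by (simp add: a_def)
  finally have "\<bar>f (Suc n) - Qhat_of p d (fst (T n)) (snd (T n)) (int (Suc n))\<bar> \<le> real d"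
    unfolding eq .
  then show ?thesis unfolding f_def .
qed

lemma C0_bound: "i \<ge> d + 1 \<Longrightarrow> Cg i = 0 \<Longrightarrow> Qg i \<le> \<gamma> + d"
proof -
  assume i: "i \<ge> d + 1" and c: "Cg i = 0"
  then obtain n where n: "i = Suc n" by (cases i) auto
  have "Qhat_of p d (fst (T n)) (snd (T n)) (int (Suc n)) \<le> \<gamma>"
    using c n Cg_Suc[of n] policy_C_0 by metis
  then show ?thesis using Qhat_close[of n] i n by simp
qed

lemma C1_bound: "i \<ge> d + 1 \<Longrightarrow> Cg i = 1 \<Longrightarrow> Qg i \<ge> \<gamma> - d"
proof -
  assume i: "i \<ge> d + 1" and c: "Cg i = 1"
  then obtain n where n: "i = Suc n" by (cases i) auto
  have "Qhat_of p d (fst (T n)) (snd (T n)) (int (Suc n)) \<ge> \<gamma>"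
    using c n Cg_Suc[of n] policy_C_1 by metis
  then show ?thesis using Qhat_close[of n] i n by simp
qed

lemma Qg_lin: "i \<ge> 1 \<Longrightarrow> Qg i \<le> q0 1 + real (i - 1)"
proof (induction i rule: dec_induct)
  case base then show ?case by simp
next
  case (step i)
  have c: "Cg i \<in> {0,1}" using Cg_01 step(1) by simp
  have xx: "x i \<in> {0,1}" using x01 step(1) by simp
  have "Qg (Suc i) \<le> Qg i + 1" unfolding Qg_Suc[OF step(1)] using inc_arith[OF c xx Qg_nn[of i]] .
  then show ?case using step by simp
qed

definition "Bm = max (q0 1 + d) (\<gamma> + d + 1)"

lemma Qg_late: "i \<ge> d + 1 \<Longrightarrow> Qg i \<le> Bm"
proof (induction i rule: dec_induct)
  case base then show ?case using Qg_lin[of "d+1"] by (simp add: Bm_def)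
next
  case (step i)
  have i1: "i \<ge> 1" using step(1) by simp
  have c: "Cg i \<in> {0,1}" using Cg_01 i1 by simp
  have xx: "x i \<in> {0,1}" using x01 i1 by simp
  show ?case
  proof (cases "Cg i = 0")
    case True
    have "Qg (Suc i) \<le> Qg i + 1" unfolding Qg_Suc[OF i1] using inc_arith[OF c xx Qg_nn[of i]] .
    then show ?thesis using C0_bound[OF step(1) True] by (simp add: Bm_def)
  next
    case False
    then have "Cg i = 1" using c by simp
    then have "Qg (Suc i) \<le> Qg i" unfolding Qg_Suc[OF i1] using dec_arith[OF xx Qg_nn[of i]] by simp
    then show ?thesis using step by simp
  qed
qed

lemma Qg_bound: "i \<ge> 1 \<Longrightarrow> Qg i \<le> Bm"
proof (cases "i \<ge> d + 1")
  case True then show ?thesis by (rule Qg_late)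
next
  case False
  assume "i \<ge> 1"
  then show ?thesis using Qg_lin[of i] False by (simp add: Bm_def)
qed

definition "rr i = Qg (Suc i) - Qg i - (1 - Cg i) + (1 - x i)"

lemma rr_bounds: "i \<ge> 1 \<Longrightarrow> 0 \<le> rr i \<and> rr i \<le> 1"
proof -
  assume i: "i \<ge> 1"
  have c: "Cg i \<in> {0,1}" using Cg_01 i by simp
  have xx: "x i \<in> {0,1}" using x01 i by simp
  show ?thesis unfolding rr_def Qg_Suc[OF i] using rr_arith[OF c xx Qg_nn[of i]] .
qed

lemma rr_zero: "\<gamma> \<ge> 1 + d \<Longrightarrow> i \<ge> d + 1 \<Longrightarrow> rr i = 0"
proof -
  assume g: "\<gamma> \<ge> 1 + d" and i: "i \<ge> d + 1"
  have i1: "i \<ge> 1" using i by simp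
  have c: "Cg i \<in> {0,1}" using Cg_01 i1 by simp
  have xx: "x i \<in> {0,1}" using x01 i1 by simp
  show ?thesis
  proof (cases "Cg i = 0")
    case True then show ?thesis unfolding rr_def Qg_Suc[OF i1] using rr0_arith[OF xx Qg_nn[of i]] by simp
  next
    case False
    then have c1: "Cg i = 1" using c by simp
    have "Qg i \<ge> 1" using C1_bound[OF i c1] g by simp
    then show ?thesis unfolding rr_def Qg_Suc[OF i1] using rr1_arith[OF xx] c1 by simp
  qed
qed

lemma rr_sum: "\<gamma> \<ge> 1 + d \<Longrightarrow> 0 \<le> (\<Sum>i=1..k. rr i) \<and> (\<Sum>i=1..k. rr i) \<le> real (min k d)"
proof (induction k)
  case 0 then show ?case by simp
next
  case (Suc k)
  have b: "0 \<le> rr (Suc k) \<and> rr (Suc k) \<le> 1" using rr_bounds by simp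
  show ?case
  proof (cases "Suc k \<ge> d + 1")
    case True
    then have "rr (Suc k) = 0" using rr_zero Suc.prems by simp
    then show ?thesis using Suc by auto
  next
    case False
    then show ?thesis using Suc b by auto
  qed
qed

lemma main_path:
  assumes "\<gamma> \<ge> 1 + d"
  shows "\<bar>(\<Sum>i=1..k. (1 - Cg i)) - (\<Sum>i=1..k. (1 - x i))\<bar> \<le> Bm + q0 1 + d"
proof -
  have tele: "(\<Sum>i=1..k. Qg (Suc i) - Qg i) = Qg (Suc k) - Qg 1"
    by (rule sum_Suc_diff) simp
  have "(\<Sum>i=1..k. rr i) = (\<Sum>i=1..k. Qg (Suc i) - Qg i) - (\<Sum>i=1..k. (1 - Cg i)) + (\<Sum>i=1..k. (1 - x i))"
    unfolding rr_def by (simp add: sum.distrib sum_subtractf)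
  then have eq: "(\<Sum>i=1..k. (1 - Cg i)) - (\<Sum>i=1..k. (1 - x i)) = Qg (Suc k) - q0 1 - (\<Sum>i=1..k. rr i)"
    using tele by simp
  have "Qg (Suc k) \<le> Bm" using Qg_bound[of "Suc k"] by simp
  moreover have "Qg (Suc k) \<ge> 0" by (rule Qg_nn)
  moreover have "q0 1 \<ge> 0" using q0nn by simp
  moreover have "real (min k d) \<le> d" by simp
  ultimately show ?thesis unfolding eq using rr_sum[OF assms, of k] by linarith
qed


lemma path_Q: "i \<ge> 1 \<Longrightarrow> 0 \<le> Qrproc p d \<gamma> q0 c0 tb x i \<and> Qrproc p d \<gamma> q0 c0 tb x i \<le> max (q0 1 + d) (\<gamma> + d + 1)"
  unfolding Qrproc_def using Qg_nn Qg_bound unfolding Bm_def by blast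

lemma path_S: "i \<ge> 1 \<Longrightarrow> 0 \<le> Sproc p d \<gamma> q0 c0 tb x i \<and> Sproc p d \<gamma> q0 c0 tb x i \<le> 1"
  unfolding Sproc_def Cproc_def using Cg_01[of i] by auto

lemma path_main: "\<gamma> \<ge> 1 + d \<Longrightarrow>
  \<bar>(\<Sum>i=1..k. Sproc p d \<gamma> q0 c0 tb x i) - (\<Sum>i=1..k. (1 - x i))\<bar> \<le> max (q0 1 + d) (\<gamma> + d + 1) + q0 1 + d"
  unfolding Sproc_def Cproc_def using main_path unfolding Bm_def by blast

end

lemma policy_meas:
  assumes "h \<in> borel_measurable M"
  shows "(\<lambda>\<omega>. policy_C \<gamma> (h \<omega>) t) \<in> borel_measurable M"
  unfolding policy_C_def using assms by measurable

lemma traj_meas: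
  assumes X: "\<And>k. k \<ge> 1 \<Longrightarrow> X k \<in> borel_measurable M"
  shows "(\<lambda>\<omega>. fst (traj p d \<gamma> q0 c0 tb (\<lambda>n. X n \<omega>) n) j) \<in> borel_measurable M \<and>
         (\<lambda>\<omega>. snd (traj p d \<gamma> q0 c0 tb (\<lambda>n. X n \<omega>) n) j) \<in> borel_measurable M"
proof (induction n arbitrary: j)
  case 0 then show ?case by (simp add: traj.simps(1))
next
  case (Suc n)
  define F where "F \<omega> = fst (traj p d \<gamma> q0 c0 tb (\<lambda>n. X n \<omega>) n)" for \<omega>
  define G where "G \<omega> = snd (traj p d \<gamma> q0 c0 tb (\<lambda>n. X n \<omega>) n)" for \<omega>
  have F[measurable]: "(\<lambda>\<omega>. F \<omega> i) \<in> borel_measurable M" for i using Suc unfolding F_def by blast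
  have G[measurable]: "(\<lambda>\<omega>. G \<omega> i) \<in> borel_measurable M" for i using Suc unfolding G_def by blast
  have XS[measurable]: "X (Suc n) \<in> borel_measurable M" using X by simp
  have qh[measurable]: "(\<lambda>\<omega>. Qhat_of p d (F \<omega>) (G \<omega>) (int (Suc n))) \<in> borel_measurable M"
    unfolding Qhat_of_def by measurable
  have c[measurable]: "(\<lambda>\<omega>. policy_C \<gamma> (Qhat_of p d (F \<omega>) (G \<omega>) (int (Suc n))) (tb (Suc n))) \<in> borel_measurable M"
    by (rule policy_meas) (rule qh)
  have "(\<lambda>\<omega>. fst (traj p d \<gamma> q0 c0 tb (\<lambda>n. X n \<omega>) (Suc n)) j) =
     (\<lambda>\<omega>. if j = int (Suc n) + 1 then
       max 0 (F \<omega> (int (Suc n))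
         + (1 - policy_C \<gamma> (Qhat_of p d (F \<omega>) (G \<omega>) (int (Suc n))) (tb (Suc n))) * X (Suc n) \<omega>
         - policy_C \<gamma> (Qhat_of p d (F \<omega>) (G \<omega>) (int (Suc n))) (tb (Suc n)) * (1 - X (Suc n) \<omega>))
     else F \<omega> j)"
    unfolding F_def G_def by (subst traj_Suc_fst) (rule refl)
  moreover have "(\<lambda>\<omega>. snd (traj p d \<gamma> q0 c0 tb (\<lambda>n. X n \<omega>) (Suc n)) j) =
     (\<lambda>\<omega>. if j = int (Suc n) then policy_C \<gamma> (Qhat_of p d (F \<omega>) (G \<omega>) (int (Suc n))) (tb (Suc n))
       else G \<omega> j)"
    unfolding F_def G_def by (subst traj_Suc_snd) (rule refl)
  ultimately show ?case by simp
qed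

theorem lemma3:
  fixes M :: "'a measure" and X :: "nat \<Rightarrow> 'a \<Rightarrow> real"
    and p \<gamma> :: real and d :: nat
    and q0 c0 :: "int \<Rightarrow> real" and tb :: "nat \<Rightarrow> bool"
  assumes "prob_space M"
    and "\<And>k. k \<ge> 1 \<Longrightarrow> X k \<in> borel_measurable M"
    and "\<And>k \<omega>. k \<ge> 1 \<Longrightarrow> \<omega> \<in> space M \<Longrightarrow> X k \<omega> \<in> {0, 1}"
    and "\<And>k. k \<ge> 1 \<Longrightarrow> (\<integral>\<omega>. X k \<omega> \<partial>M) = p"
    and "0 \<le> p" and "p < 1" and "\<gamma> > 0"
    and "\<And>k. k \<le> 1 \<Longrightarrow> q0 k \<ge> 0"
    and "\<And>k. k \<le> 0 \<Longrightarrow> c0 k \<in> {0, 1}"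
    and "stationary_ergodic M X"
  shows "limsup (\<lambda>k. ereal \<bar>(\<integral>\<omega>. (\<Sum>i=1..k. Sproc p d \<gamma> q0 c0 tb (\<lambda>n. X n \<omega>) i) / real k \<partial>M)
                         - (1 - p)\<bar>) \<le> ereal ((1 + 2 * real d) / \<gamma>)
         \<and> (\<forall>k\<ge>1. integrable M (\<lambda>\<omega>. (\<Sum>i=1..k. Qrproc p d \<gamma> q0 c0 tb (\<lambda>n. X n \<omega>) i) / real k))"
proof -
  interpret P: prob_space M by (rule assms(1))
  have p1: "p \<le> 1" using assms(6) by simp
  define Bq where "Bq = max (q0 1 + d) (\<gamma> + d + 1)"
  define K where "K = Bq + q0 1 + d"
  have x01: "\<And>i. i \<ge> 1 \<Longrightarrow> X i \<omega> \<in> {0,1}" if "\<omega> \<in> space M" for \<omega>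
    using assms(3) that by blast
  have trm: "(\<lambda>\<omega>. fst (traj p d \<gamma> q0 c0 tb (\<lambda>n. X n \<omega>) n) j) \<in> borel_measurable M"
            "(\<lambda>\<omega>. snd (traj p d \<gamma> q0 c0 tb (\<lambda>n. X n \<omega>) n) j) \<in> borel_measurable M" for n j
    using traj_meas[of X M, OF assms(2)] by blast+
  have Sm[measurable]: "(\<lambda>\<omega>. Sproc p d \<gamma> q0 c0 tb (\<lambda>n. X n \<omega>) i) \<in> borel_measurable M" for i
    unfolding Sproc_def Cproc_def using trm(2) by measurable
  have Qm[measurable]: "(\<lambda>\<omega>. Qrproc p d \<gamma> q0 c0 tb (\<lambda>n. X n \<omega>) i) \<in> borel_measurable M" for i
    unfolding Qrproc_def using trm(1) by measurable
  have Sb: "0 \<le> Sproc p d \<gamma> q0 c0 tb (\<lambda>n. X n \<omega>) i \<and> Sproc p d \<gamma> q0 c0 tb (\<lambda>n. X n \<omega>) i \<le> 1"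
    if "\<omega> \<in> space M" "i \<ge> 1" for \<omega> i
    by (rule path_S[OF x01[OF that(1)] assms(8) assms(5) p1 that(2)])
  have Qb: "0 \<le> Qrproc p d \<gamma> q0 c0 tb (\<lambda>n. X n \<omega>) i \<and> Qrproc p d \<gamma> q0 c0 tb (\<lambda>n. X n \<omega>) i \<le> Bq"
    if "\<omega> \<in> space M" "i \<ge> 1" for \<omega> i
    unfolding Bq_def by (rule path_Q[OF x01[OF that(1)] assms(8) assms(5) p1 that(2)])
  define f where "f k \<omega> = (\<Sum>i=1..k. Sproc p d \<gamma> q0 c0 tb (\<lambda>n. X n \<omega>) i)" for k \<omega>
  have fm[measurable]: "f k \<in> borel_measurable M" for k unfolding f_def by measurable
  have fb: "0 \<le> f k \<omega> \<and> f k \<omega> \<le> real k" if "\<omega> \<in> space M" for k \<omega>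
  proof -
    have "f k \<omega> \<le> (\<Sum>i=1..k. 1)" unfolding f_def by (rule sum_mono) (use Sb[OF that] in auto)
    moreover have "0 \<le> f k \<omega>" unfolding f_def by (rule sum_nonneg) (use Sb[OF that] in auto)
    ultimately show ?thesis by simp
  qed
  have fint: "integrable M (f k)" for k
    by (rule P.integrable_const_bound[where B="real k"]) (use fb in auto)
  have fkb: "0 \<le> f k \<omega> / real k \<and> f k \<omega> / real k \<le> 1" if "\<omega> \<in> space M" for k \<omega>
    using fb[OF that, of k] by (cases "k = 0") (auto simp: divide_le_eq)
  have part2: "\<forall>k\<ge>1. integrable M (\<lambda>\<omega>. (\<Sum>i=1..k. Qrproc p d \<gamma> q0 c0 tb (\<lambda>n. X n \<omega>) i) / real k)"
  proof (intro allI impI)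
    fix k :: nat assume k: "k \<ge> 1"
    show "integrable M (\<lambda>\<omega>. (\<Sum>i=1..k. Qrproc p d \<gamma> q0 c0 tb (\<lambda>n. X n \<omega>) i) / real k)"
    proof (rule P.integrable_const_bound[where B="real k * Bq"])
      show "AE \<omega> in M. norm ((\<Sum>i=1..k. Qrproc p d \<gamma> q0 c0 tb (\<lambda>n. X n \<omega>) i) / real k) \<le> real k * Bq"
      proof (rule AE_I2)
        fix \<omega> assume w: "\<omega> \<in> space M"
        have s0: "0 \<le> (\<Sum>i=1..k. Qrproc p d \<gamma> q0 c0 tb (\<lambda>n. X n \<omega>) i)"
          by (rule sum_nonneg) (use Qb[OF w] in auto)
        have s1: "(\<Sum>i=1..k. Qrproc p d \<gamma> q0 c0 tb (\<lambda>n. X n \<omega>) i) \<le> (\<Sum>i=1..k. Bq)"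
          by (rule sum_mono) (use Qb[OF w] in auto)
        have "(\<Sum>i=1..k. Qrproc p d \<gamma> q0 c0 tb (\<lambda>n. X n \<omega>) i) / real k \<le> (\<Sum>i=1..k. Qrproc p d \<gamma> q0 c0 tb (\<lambda>n. X n \<omega>) i)"
          using s0 k by (simp add: divide_le_eq mult_le_cancel_left1)
        then show "norm ((\<Sum>i=1..k. Qrproc p d \<gamma> q0 c0 tb (\<lambda>n. X n \<omega>) i) / real k) \<le> real k * Bq"
          using s0 s1 k by simp
      qed
    qed measurable
  qed
  have ev: "eventually (\<lambda>k. \<bar>(\<integral>\<omega>. f k \<omega> / real k \<partial>M) - (1 - p)\<bar> \<le> (1 + 2 * real d) / \<gamma>) sequentially"
  proof (cases "\<gamma> \<ge> 1 + d")
    case False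
    have "1 \<le> (1 + 2 * real d) / \<gamma>" using False assms(7) by (simp add: le_divide_eq)
    moreover have "\<bar>(\<integral>\<omega>. f k \<omega> / real k \<partial>M) - (1 - p)\<bar> \<le> 1" for k
    proof -
      have i1: "integrable M (\<lambda>\<omega>. f k \<omega> / real k)" using fint by simp
      have "0 \<le> (\<integral>\<omega>. f k \<omega> / real k \<partial>M)"
        by (rule integral_nonneg_AE) (use fkb in auto)
      moreover have "(\<integral>\<omega>. f k \<omega> / real k \<partial>M) \<le> 1"
        by (rule P.integral_le_const[OF i1]) (use fkb in auto)
      ultimately show ?thesis using assms(5) assms(6) by linarith
    qed
    ultimately show ?thesis by (intro always_eventually allI) (meson order_trans)
  next
    case True
    have key: "\<bar>(\<integral>\<omega>. f k \<omega> / real k \<partial>M) - (1 - p)\<bar> \<le> K / real k" if k: "k \<ge> 1" for k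
    proof -
      define g where "g \<omega> = (\<Sum>i=1..k. (1 - X i \<omega>))" for \<omega>
      have Xi: "integrable M (X i)" if "i \<ge> 1" for i
      proof (rule P.integrable_const_bound[where B=1])
        show "AE \<omega> in M. norm (X i \<omega>) \<le> 1"
        proof (rule AE_I2)
          fix \<omega> assume "\<omega> \<in> space M"
          then have "X i \<omega> \<in> {0,1}" using x01 that by blast
          then show "norm (X i \<omega>) \<le> 1" by auto
        qed
      qed (rule assms(2)[OF that])
      have ci: "integrable M (\<lambda>\<omega>. 1::real)" by (rule P.integrable_const_bound[where B=1]) auto
      have gi: "integrable M g" unfolding g_def
      proof (rule Bochner_Integration.integrable_sum[where f="\<lambda>i \<omega>. 1 - X i \<omega>"])
        fix i assume "i \<in> {1..k}"
        then have i: "i \<ge> 1" by simp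
        show "integrable M (\<lambda>\<omega>. 1 - X i \<omega>)" by (rule Bochner_Integration.integrable_diff[OF ci Xi[OF i]])
      qed
      have "(\<integral>\<omega>. g \<omega> \<partial>M) = (\<Sum>i=1..k. (\<integral>\<omega>. (1 - X i \<omega>) \<partial>M))"
        unfolding g_def
      proof (rule Bochner_Integration.integral_sum)
        fix i assume "i \<in> {1..k}"
        then have i: "i \<ge> 1" by simp
        show "integrable M (\<lambda>\<omega>. 1 - X i \<omega>)" by (rule Bochner_Integration.integrable_diff[OF ci Xi[OF i]])
      qed
      also have "\<dots> = (\<Sum>i=1..k. (1 - p))"
      proof (rule sum.cong)
        fix i assume "i \<in> {1..k}"
        then have i: "i \<ge> 1" by simp
        have "(\<integral>\<omega>. (1 - X i \<omega>) \<partial>M) = (\<integral>\<omega>. 1 \<partial>M) - (\<integral>\<omega>. X i \<omega> \<partial>M)"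
          by (rule Bochner_Integration.integral_diff[OF ci Xi[OF i]])
        then show "(\<integral>\<omega>. (1 - X i \<omega>) \<partial>M) = 1 - p" using assms(4)[OF i] P.prob_space by simp
      qed simp
      finally have gI: "(\<integral>\<omega>. g \<omega> \<partial>M) = real k * (1 - p)" by simp
      have dif: "\<bar>f k \<omega> - g \<omega>\<bar> \<le> K" if "\<omega> \<in> space M" for \<omega>
        unfolding f_def g_def K_def Bq_def
        by (rule path_main[OF x01[OF that] assms(8) assms(5) p1 True])
      have dI: "integrable M (\<lambda>\<omega>. \<bar>f k \<omega> - g \<omega>\<bar>)"
        using fint gi by auto
      have "\<bar>(\<integral>\<omega>. f k \<omega> \<partial>M) - (\<integral>\<omega>. g \<omega> \<partial>M)\<bar> = \<bar>\<integral>\<omega>. f k \<omega> - g \<omega> \<partial>M\<bar>"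
        by (subst Bochner_Integration.integral_diff[OF fint gi]) simp
      also have "\<dots> \<le> (\<integral>\<omega>. \<bar>f k \<omega> - g \<omega>\<bar> \<partial>M)" by (rule integral_abs_bound)
      also have "\<dots> \<le> K" by (rule P.integral_le_const[OF dI]) (use dif in auto)
      finally have D: "\<bar>(\<integral>\<omega>. f k \<omega> \<partial>M) - real k * (1 - p)\<bar> \<le> K" unfolding gI .
      have kpos: "real k > 0" using k by simp
      have "(\<integral>\<omega>. f k \<omega> / real k \<partial>M) - (1 - p) = ((\<integral>\<omega>. f k \<omega> \<partial>M) - real k * (1 - p)) / real k"
        using kpos by (simp add: integral_divide_zero field_simps)
      then have "\<bar>(\<integral>\<omega>. f k \<omega> / real k \<partial>M) - (1 - p)\<bar> = \<bar>(\<integral>\<omega>. f k \<omega> \<partial>M) - real k * (1 - p)\<bar> / real k"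
        using kpos by simp
      also have "\<dots> \<le> K / real k" using D kpos by (simp add: divide_right_mono)
      finally show ?thesis .
    qed
    have pos: "(1 + 2 * real d) / \<gamma> > 0" using assms(7) by simp
    have "(\<lambda>k. K / real k) \<longlonglongrightarrow> 0" by (rule lim_const_over_n)
    then have "eventually (\<lambda>k. K / real k < (1 + 2 * real d) / \<gamma>) sequentially"
      using pos by (rule order_tendstoD(2))
    moreover have "eventually (\<lambda>k. k \<ge> (1::nat)) sequentially" by (rule eventually_ge_at_top)
    ultimately show ?thesis
      by eventually_elim (use key in fastforce)
  qed
  have part1: "limsup (\<lambda>k. ereal \<bar>(\<integral>\<omega>. f k \<omega> / real k \<partial>M) - (1 - p)\<bar>) \<le> ereal ((1 + 2 * real d) / \<gamma>)"
    by (rule Limsup_bounded) (use ev in \<open>auto elim: eventually_mono\<close>)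
  show ?thesis using part1 part2 unfolding f_def by simp
qed

end
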